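(* Let $n,d\in\mathbb{Z}_+$, let $Q=(Q_{jk})_{j,k=0}^{n-1}$ be a real symmetric matrix, let $c\in\mathbb{R}$, and let $f:\mathbb{F}_2^n\to[-2^{d-1},2^{d-1})\cap\mathbb{Z}$ be given by $f(x)=c+\sum_{j,k=0}^{n-1}Q_{jk}x_jx_k$ (so $c=f(0)$). Set $q_j=\sum_{k}Q_{jk}$ and $q_\emptyset=f(0)+\tfrac14\mathrm{tr}(Q)+\tfrac14\mathrm{sum}(Q)$, where $\mathrm{sum}(Q)=\sum_{j,k}Q_{jk}$. Define the following unitaries on $n+d$ qubits (an $n$-qubit register holding $x=(x_0,\dots,x_{n-1})$ and a $d$-qubit register holding $y$): - $\tilde U_\emptyset=\mathbb{1}\otimes\mathcal{P}_d(q_\emptyset)$; - for $0\le j\le n-1$, $\tilde U_j$ = (controlled on qubit $x_j$, apply $X^{\otimes d}$ to the $y$-register), then $\mathcal{P}_d(-\tfrac{q_j}{2})$ on the $y$-register, then again (controlled on $x_j$, apply $X^{\otimes d}$ to the $y$-register); - for $0\le j<k\le n-1$, $\tilde U_{jk}$ = CNOT with control $x_j$ and target $x_k$, then (controlled on qubit $x_k$, apply $X^{\otimes d}$ to the $y$-register), then $\mathcal{P}_d(\tfrac{Q_{jk}}{2})$ on the $y$-register, then (controlled on $x_k$, apply $X^{\otimes d}$ to the $y$-register), then CNOT with control $x_j$ and target $x_k$. Let $\tilde U_{f,d}=\tilde U_\emptyset\circ\prod_{j=0}^{n-1}\tilde U_j\circ\prod_{j=0}^{n-2}\prod_{k=j+1}^{n-1}\tilde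 U_{jk}$. Then for every $x\in\mathbb{F}_2^n$ and every $y\in\mathbb{F}_2^d$ (identified with an integer mod $2^d$), $$\tilde U_{f,d}\ket{x}\ket{y}_d=\exp\!\Big(\tfrac{2\pi i}{2^d}f(x)\,y+i\alpha_{f,x}\Big)\ket{x}\ket{y}_d,\qquad \alpha_{f,x}=\tfrac{\pi(1-2^d)}{2^d}\big(f(x)-f(0)\big).$$ Consequently $U_{f,d}=(\mathbb{1}\otimes\mathrm{QFT}_d^\dagger)\circ\tilde U_{f,d}\circ(\mathbb{1}\otimes\mathrm{QFT}_d)$ satisfies $U_{f,d}\ket{x}\ket{y}_d=e^{i\alpha_{f,x}}\ket{x}\ket{y+f(x)}_d$ for all $x,y$, i.e. it is a projective quantum dictionary encoder for $f$ with garbage phases $\alpha_{f,x}$.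
   Context: Computational basis notation: for $x=(x_0,\dots,x_{n-1})\in\mathbb{F}_2^n$, $\ket{x}=\ket{x_0}\cdots\ket{x_{n-1}}$. For $\bar y\in\mathbb{Z}$ and $d\in\mathbb{Z}_+$, $\ket{\bar y}_d=\ket{y_0}\cdots\ket{y_{d-1}}$ where $(y_0,\dots,y_{d-1})\in\mathbb{F}_2^d$ satisfies $\bar y\equiv\sum_{j=0}^{d-1}y_j2^{d-1-j}\pmod{2^d}$; arithmetic inside $\ket{\cdot}_d$ is mod $2^d$. Note $X^{\otimes d}\ket{y}_d=\ket{-y-1}_d$. For $k\in\mathbb{R}$, $\mathcal{P}_d(k)=\bigotimes_{j=0}^{d-1}\mathrm{diag}(1,e^{\pi i k/2^j})$, equivalently $\mathcal{P}_d(k)\ket{y}_d=e^{2\pi i ky/2^d}\ket{y}_d$. $\mathrm{QFT}_d$ is the $d$-qubit quantum Fourier transform, $\mathrm{QFT}_d\ket{y}_d=2^{-d/2}\sum_{z=0}^{2^d-1}e^{2\pi i yz/2^d}\ket{z}_d$. A unitary $U_{f,d}$ on $n+d$ qubits is a projective quantum dictionary encoder for $f:\mathbb{F}_2^n\to\mathbb{Z}$ if $U_{f,d}\ket{x}\ket{y}_d=e^{i\alpha}\ket{x}\ket{y+f(x)}_d$ for all $x,y$, for some real phases $\alpha$ (the garbage phases). *)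

theory Defs
  imports Complex_Main
begin

text \<open>Model: an (n+d)-qubit computational basis state is a bool list of length n+d;
  the first n entries are the x-register (x_0,...,x_{n-1}), the last d entries the
  y-register (y_0,...,y_{d-1}), with y_0 the most significant bit.
  A state is a function from bool lists to complex amplitudes (supported on lists of
  length n+d). An operator is given by its matrix M out in, acting linearly.\<close>

type_synonym state = "bool list \<Rightarrow> complex"
type_synonym mat = "bool list \<Rightarrow> bool list \<Rightarrow> complex"

definition lin_op :: "nat \<Rightarrow> mat \<Rightarrow> state \<Rightarrow> state" where
  "lin_op N M \<psi> = (\<lambda>b. \<Sum>b'\<in>{bs. length bs = N}. M b b' * \<psi> b')"

definition adj :: "mat \<Rightarrow> mat" where
  "adj M = (\<lambda>b b'. cnj (M b' b))"

definition ket :: "bool list \<Rightarrow> state" where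
  "ket b = (\<lambda>b'. if b' = b then 1 else 0)"

definition bval :: "bool list \<Rightarrow> nat" where
  "bval ys = (\<Sum>j<length ys. if ys ! j then 2 ^ (length ys - 1 - j) else 0)"

definition bits_d :: "nat \<Rightarrow> int \<Rightarrow> bool list" where
  "bits_d d ybar = map (\<lambda>j. odd ((ybar mod 2 ^ d) div 2 ^ (d - 1 - j))) [0..<d]"

definition ket_xy :: "nat \<Rightarrow> bool list \<Rightarrow> int \<Rightarrow> state" where
  "ket_xy d x ybar = ket (x @ bits_d d ybar)"

definition perm_mat :: "(bool list \<Rightarrow> bool list) \<Rightarrow> mat" where
  "perm_mat g = (\<lambda>b b'. if b = g b' then 1 else 0)"

definition diag_mat :: "(bool list \<Rightarrow> complex) \<Rightarrow> mat" where
  "diag_mat \<phi> = (\<lambda>b b'. if b = b' then \<phi> b else 0)"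

definition CNOT :: "nat \<Rightarrow> nat \<Rightarrow> nat \<Rightarrow> state \<Rightarrow> state" where
  "CNOT N j k = lin_op N (perm_mat (\<lambda>b. b[k := (b ! k \<noteq> b ! j)]))"

definition CXd :: "nat \<Rightarrow> nat \<Rightarrow> nat \<Rightarrow> state \<Rightarrow> state" where
  "CXd n d j = lin_op (n + d)
     (perm_mat (\<lambda>b. if b ! j then take n b @ map Not (drop n b) else b))"

definition Pd :: "nat \<Rightarrow> nat \<Rightarrow> real \<Rightarrow> state \<Rightarrow> state" where
  "Pd n d k = lin_op (n + d)
     (diag_mat (\<lambda>b. \<Prod>j<d. if drop n b ! j then cis (pi * k / 2 ^ j) else 1))"

definition QFT_mat :: "nat \<Rightarrow> nat \<Rightarrow> mat" where
  "QFT_mat n d = (\<lambda>b b'. if length b = n + d \<and> length b' = n + d \<and> take n b = take n b'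
      then complex_of_real (2 powr (- real d / 2))
           * cis (2 * pi * real (bval (drop n b')) * real (bval (drop n b)) / 2 ^ d)
      else 0)"

definition QFT :: "nat \<Rightarrow> nat \<Rightarrow> state \<Rightarrow> state" where
  "QFT n d = lin_op (n + d) (QFT_mat n d)"

definition QFT_dag :: "nat \<Rightarrow> nat \<Rightarrow> state \<Rightarrow> state" where
  "QFT_dag n d = lin_op (n + d) (adj (QFT_mat n d))"

definition comp_list :: "('a \<Rightarrow> 'a) list \<Rightarrow> 'a \<Rightarrow> 'a" where
  "comp_list As = foldr (\<circ>) As id"

definition U_empty :: "nat \<Rightarrow> nat \<Rightarrow> real \<Rightarrow> state \<Rightarrow> state" where
  "U_empty n d q0 = Pd n d q0"

definition U_j :: "nat \<Rightarrow> nat \<Rightarrow> real \<Rightarrow> nat \<Rightarrow> state \<Rightarrow> state" where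
  "U_j n d qj j = CXd n d j \<circ> Pd n d (- qj / 2) \<circ> CXd n d j"

definition U_jk :: "nat \<Rightarrow> nat \<Rightarrow> real \<Rightarrow> nat \<Rightarrow> nat \<Rightarrow> state \<Rightarrow> state" where
  "U_jk n d Qjk j k = CNOT (n + d) j k \<circ> CXd n d k \<circ> Pd n d (Qjk / 2) \<circ> CXd n d k \<circ> CNOT (n + d) j k"

definition Utilde :: "nat \<Rightarrow> nat \<Rightarrow> (nat \<Rightarrow> nat \<Rightarrow> real) \<Rightarrow> real \<Rightarrow> state \<Rightarrow> state" where
  "Utilde n d Q f0 =
     (let qe = f0 + (\<Sum>j<n. Q j j) / 4 + (\<Sum>j<n. \<Sum>k<n. Q j k) / 4;
          q = (\<lambda>j. \<Sum>k<n. Q j k)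
      in U_empty n d qe
         \<circ> comp_list (map (\<lambda>j. U_j n d (q j) j) [0..<n])
         \<circ> comp_list [U_jk n d (Q j k) j k. j \<leftarrow> [0..<n - 1], k \<leftarrow> [j + 1..<n]])"

definition U_f :: "nat \<Rightarrow> nat \<Rightarrow> (nat \<Rightarrow> nat \<Rightarrow> real) \<Rightarrow> real \<Rightarrow> state \<Rightarrow> state" where
  "U_f n d Q f0 = QFT_dag n d \<circ> Utilde n d Q f0 \<circ> QFT n d"

definition proj_encoder :: "nat \<Rightarrow> nat \<Rightarrow> (bool list \<Rightarrow> int) \<Rightarrow> (state \<Rightarrow> state) \<Rightarrow> bool" where
  "proj_encoder n d f U \<longleftrightarrow> (\<forall>x y. length x = n \<longrightarrow>
      (\<exists>\<alpha>::real. U (ket_xy d x y) = (\<lambda>b. cis \<alpha> * ket_xy d x (y + f x) b)))"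

end

theory Submission
  imports Defs
begin

definition Dg :: "nat \<Rightarrow> (bool list \<Rightarrow> complex) \<Rightarrow> state \<Rightarrow> state" where
  "Dg N \<Phi> \<psi> = (\<lambda>b. if length b = N then \<Phi> b * \<psi> b else 0)"

definition Pm :: "nat \<Rightarrow> (bool list \<Rightarrow> bool list) \<Rightarrow> state \<Rightarrow> state" where
  "Pm N g \<psi> = (\<lambda>b. if length b = N then \<psi> (g b) else 0)"

lemma finite_len: "finite {bs::bool list. length bs = N}"
  using finite_lists_length_eq[of "UNIV::bool set" N] by simp

lemma lin_perm:
  assumes "\<And>b. length b = N \<Longrightarrow> length (g b) = N \<and> g (g b) = b"
  shows "lin_op N (perm_mat g) \<psi> = Pm N g \<psi>"
proof (rule ext)
  fix b :: "bool list"
  show "lin_op N (perm_mat g) \<psi> b = Pm N g \<psi> b"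
  proof (cases "length b = N")
    case True
    have "lin_op N (perm_mat g) \<psi> b = (\<Sum>b'\<in>{bs. length bs = N}. if b' = g b then \<psi> b' else 0)"
      unfolding lin_op_def perm_mat_def
      by (rule sum.cong) (use assms True in auto)
    also have "\<dots> = \<psi> (g b)" using assms[OF True] finite_len by (simp add: sum.delta')
    finally show ?thesis using True by (simp add: Pm_def)
  next
    case False
    have H: "\<forall>b'\<in>{bs. length bs = N}. b \<noteq> g b'" using assms False by auto
    have "lin_op N (perm_mat g) \<psi> b = 0"
      unfolding lin_op_def perm_mat_def
      by (rule sum.neutral) (use H in auto)
    then show ?thesis using False by (simp add: Pm_def)
  qed
qed

lemma lin_diag: "lin_op N (diag_mat \<phi>) \<psi> = Dg N \<phi> \<psi>"
proof (rule ext)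
  fix b :: "bool list"
  have "lin_op N (diag_mat \<phi>) \<psi> b = (\<Sum>b'\<in>{bs. length bs = N}. if b' = b then \<phi> b * \<psi> b' else 0)"
    unfolding lin_op_def diag_mat_def by (rule sum.cong) auto
  also have "\<dots> = Dg N \<phi> \<psi> b" using finite_len by (simp add: sum.delta' Dg_def)
  finally show "lin_op N (diag_mat \<phi>) \<psi> b = Dg N \<phi> \<psi> b" .
qed

lemma Pm_Pm:
  assumes "\<And>b. length b = N \<Longrightarrow> length (g1 b) = N"
  shows "Pm N g1 (Pm N g2 \<psi>) = Pm N (g2 \<circ> g1) \<psi>"
  using assms by (auto simp: Pm_def)

lemma Pm_Dg_Pm:
  assumes "\<And>b. length b = N \<Longrightarrow> length (h b) = N \<and> h' (h b) = b"
  shows "Pm N h (Dg N \<phi> (Pm N h' \<psi>)) = Dg N (\<phi> \<circ> h) \<psi>"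
  using assms by (auto simp: Pm_def Dg_def)

lemma Dg_Dg: "Dg N \<phi>1 (Dg N \<phi>2 \<psi>) = Dg N (\<lambda>b. \<phi>1 b * \<phi>2 b) \<psi>"
  by (auto simp: Dg_def)

lemma comp_list_Dg:
  assumes "\<And>i \<psi>. i \<in> set L \<Longrightarrow> g i \<psi> = Dg N (\<phi> i) \<psi>"
  shows "Dg N \<phi>0 (comp_list (map g L) \<psi>) = Dg N (\<lambda>b. \<phi>0 b * (\<Prod>i\<leftarrow>L. \<phi> i b)) \<psi>"
  using assms
proof (induction L arbitrary: \<phi>0)
  case Nil
  then show ?case by (simp add: comp_list_def)
next
  case (Cons a L)
  have "Dg N \<phi>0 (comp_list (map g (a # L)) \<psi>) = Dg N \<phi>0 (g a (comp_list (map g L) \<psi>))"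
    by (simp add: comp_list_def)
  also have "\<dots> = Dg N (\<lambda>b. \<phi>0 b * \<phi> a b) (comp_list (map g L) \<psi>)"
    using Cons.prems by (simp add: Dg_Dg)
  also have "\<dots> = Dg N (\<lambda>b. (\<phi>0 b * \<phi> a b) * (\<Prod>i\<leftarrow>L. \<phi> i b)) \<psi>"
    using Cons by simp
  finally show ?case by (simp add: mult.assoc)
qed

lemma prod_list_cis: "(\<Prod>i\<leftarrow>L. cis (\<theta> i)) = cis (\<Sum>i\<leftarrow>L. \<theta> i)"
  by (induction L) (auto simp: cis_mult)


lemma len_bits[simp]: "length (bits_d d z) = d"
  by (simp add: bits_d_def)

lemma bits_nth: assumes "j < d" shows "bits_d d z ! j = bit z (d - 1 - j)"
proof -
  have "odd ((z mod 2 ^ d) div 2 ^ (d - 1 - j)) = bit (take_bit d z) (d - 1 - j)"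
    by (simp add: bit_iff_odd take_bit_eq_mod)
  also have "\<dots> = bit z (d - 1 - j)" using assms by (simp add: bit_take_bit_iff)
  finally show ?thesis using assms by (simp add: bits_d_def)
qed

lemma bval_bits: "int (bval (bits_d d z)) = z mod 2 ^ d"
proof -
  have "int (bval (bits_d d z)) = (\<Sum>j<d. if bit z (d - 1 - j) then 2 ^ (d - 1 - j) else 0)"
    unfolding bval_def by (simp add: bits_nth of_nat_sum if_distrib cong: if_cong)
  also have "\<dots> = (\<Sum>j<d. of_bool (bit z (d - Suc j)) * 2 ^ (d - Suc j))"
    by (rule sum.cong) auto
  also have "\<dots> = (\<Sum>e<d. of_bool (bit z e) * 2 ^ e)"
    by (rule sum.nat_diff_reindex)
  also have "\<dots> = horner_sum of_bool 2 (map (bit z) [0..<d])"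
    by (simp add: horner_sum_eq_sum atLeast0LessThan)
  also have "\<dots> = take_bit d z" by (rule horner_sum_bit_eq_take_bit)
  finally show ?thesis by (simp add: take_bit_eq_mod)
qed

lemma bval_bits_nat: "0 \<le> z \<Longrightarrow> z < 2 ^ d \<Longrightarrow> int (bval (bits_d d z)) = z"
  unfolding bval_bits by (rule mod_pos_pos_trivial)

lemma bits_mod: "bits_d d (z mod 2 ^ d) = bits_d d z"
  unfolding bits_d_def by (simp only: mod_mod_trivial)

lemma inj_bits: "inj_on (bits_d d) {0..<2 ^ d}"
proof (rule inj_onI)
  fix a b :: int assume a: "a \<in> {0..<2 ^ d}" and b: "b \<in> {0..<2 ^ d}" and e: "bits_d d a = bits_d d b"
  from a have a': "0 \<le> a" "a < 2 ^ d" by auto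
  from b have b': "0 \<le> b" "b < 2 ^ d" by auto
  have "a = int (bval (bits_d d a))" using bval_bits_nat[OF a'] by simp
  also have "\<dots> = int (bval (bits_d d b))" using e by simp
  also have "\<dots> = b" using bval_bits_nat[OF b'] by simp
  finally show "a = b" .
qed

lemma bits_image: "bits_d d ` {0..<2 ^ d} = {w. length w = d}"
proof (rule card_subset_eq)
  show "finite {w::bool list. length w = d}" by (rule finite_len)
  show "bits_d d ` {0..<2 ^ d} \<subseteq> {w. length w = d}" by auto
  have "card {w::bool list. length w = d} = 2 ^ d"
    using card_lists_length_eq[of "UNIV::bool set" d] by simp
  then show "card (bits_d d ` {0..<2 ^ d}) = card {w::bool list. length w = d}"
    using card_image[OF inj_bits[of d]] by simp
qed

lemma bits_bval: assumes "length w = d" shows "bits_d d (int (bval w)) = w"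
proof -
  from assms bits_image[of d] obtain z where z: "z \<in> {0..<2 ^ d}" "w = bits_d d z" by blast
  then have "int (bval w) = z" using bval_bits_nat[of z d] by auto
  then show ?thesis using z by simp
qed

lemma bval_lt: assumes "length w = d" shows "int (bval w) < 2 ^ d"
proof -
  have "int (bval w) = int (bval (bits_d d (int (bval w))))" using bits_bval[OF assms] by simp
  also have "\<dots> = int (bval w) mod 2 ^ d" by (rule bval_bits)
  also have "\<dots> < 2 ^ d" by simp
  finally show ?thesis .
qed

lemma bval_real: "length w = d \<Longrightarrow> real (bval w) = (\<Sum>j<d. if w ! j then 2 ^ (d - 1 - j) else 0)"
  unfolding bval_def by (simp add: of_nat_sum if_distrib cong: if_cong)

lemma bval_not: assumes "length w = d" shows "real (bval (map Not w)) = 2 ^ d - 1 - real (bval w)"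
proof -
  have "real (bval (map Not w)) + real (bval w) = (\<Sum>j<d. (if map Not w ! j then 2 ^ (d - 1 - j) else 0) + (if w ! j then 2 ^ (d - 1 - j) else 0))"
    using assms by (simp add: bval_real sum.distrib)
  also have "\<dots> = (\<Sum>j<d. 2 ^ (d - 1 - j))"
    by (rule sum.cong) (use assms in auto)
  also have "\<dots> = (\<Sum>j<d. 2 ^ (d - Suc j))" by simp
  also have "\<dots> = (\<Sum>e<d. (2::real) ^ e)" by (rule sum.nat_diff_reindex)
  also have "\<dots> = 2 ^ d - 1"
  proof -
    have "(\<Sum>e<d. (2::nat) ^ e) = 2 ^ d - 1" using sum_power2[of d] by (simp add: atLeast0LessThan)
    then have "real (\<Sum>e<d. (2::nat) ^ e) = real (2 ^ d - 1)" by simp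
    then show ?thesis by (simp add: of_nat_sum of_nat_diff)
  qed
  finally show ?thesis by simp
qed

lemma cis_sum_set: "(\<Prod>j\<in>A. cis (f j)) = cis (\<Sum>j\<in>A. f j)"
  by (induction A rule: infinite_finite_induct) (auto simp: cis_mult)

lemma Pd_phase:
  assumes "length w = d"
  shows "(\<Prod>j<d. if w ! j then cis (pi * k / 2 ^ j) else 1) = cis (2 * pi * k * real (bval w) / 2 ^ d)"
proof -
  have "(\<Prod>j<d. if w ! j then cis (pi * k / 2 ^ j) else 1) = (\<Prod>j<d. cis (if w ! j then pi * k / 2 ^ j else 0))"
    by (rule prod.cong) auto
  also have "\<dots> = cis (\<Sum>j<d. if w ! j then pi * k / 2 ^ j else 0)" by (rule cis_sum_set)
  also have "(\<Sum>j<d. if w ! j then pi * k / 2 ^ j else 0) = 2 * pi * k * real (bval w) / 2 ^ d"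
  proof -
    have "2 * pi * k * real (bval w) / 2 ^ d = (\<Sum>j<d. (2 * pi * k / 2 ^ d) * (if w ! j then 2 ^ (d - 1 - j) else 0))"
      using assms by (simp add: bval_real sum_distrib_left sum_divide_distrib)
    also have "\<dots> = (\<Sum>j<d. if w ! j then pi * k / 2 ^ j else 0)"
    proof (rule sum.cong)
      fix j assume "j \<in> {..<d}"
      then have dd: "d = Suc ((d - 1 - j) + j)" by simp
      have "(2::real) ^ d = 2 * 2 ^ (d - 1 - j) * 2 ^ j"
        by (subst dd) (simp only: power_Suc power_add mult.assoc)
      then have "(2 * pi * k / 2 ^ d) * 2 ^ (d - 1 - j) = pi * k / 2 ^ j"
        by (simp add: divide_simps)
      then show "(2 * pi * k / 2 ^ d) * (if w ! j then 2 ^ (d - 1 - j) else 0) = (if w ! j then pi * k / 2 ^ j else 0)"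
        by simp
    qed simp
    finally show ?thesis by simp
  qed
  finally show ?thesis .
qed


definition cxg :: "nat \<Rightarrow> nat \<Rightarrow> bool list \<Rightarrow> bool list" where
  "cxg n j b = (if b ! j then take n b @ map Not (drop n b) else b)"

definition cng :: "nat \<Rightarrow> nat \<Rightarrow> bool list \<Rightarrow> bool list" where
  "cng j k b = b[k := (b ! k \<noteq> b ! j)]"

definition pdph :: "nat \<Rightarrow> nat \<Rightarrow> real \<Rightarrow> bool list \<Rightarrow> complex" where
  "pdph n d k b = (\<Prod>i<d. if drop n b ! i then cis (pi * k / 2 ^ i) else 1)"

lemma cxg_len: "length b = n + d \<Longrightarrow> length (cxg n j b) = n + d"
  by (simp add: cxg_def)

lemma cxg_inv: assumes "length b = n + d" "j < n" shows "cxg n j (cxg n j b) = b"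
proof (cases "b ! j")
  case True
  have "(take n b @ map Not (drop n b)) ! j = b ! j" using assms by (simp add: nth_append)
  then show ?thesis using True assms by (simp add: cxg_def o_def)
next
  case False
  then show ?thesis by (simp add: cxg_def)
qed

lemma cxg_drop: "length b = n + d \<Longrightarrow> drop n (cxg n j b) = (if b ! j then map Not (drop n b) else drop n b)"
  by (simp add: cxg_def)

lemma cng_len: "length (cng j k b) = length b"
  by (simp add: cng_def)

lemma cng_inv: assumes "j < length b" "k < length b" "j \<noteq> k" shows "cng j k (cng j k b) = b"
  using assms by (auto simp: cng_def list_update_same_conv)

lemma cng_nth_k: "k < length b \<Longrightarrow> j \<noteq> k \<Longrightarrow> cng j k b ! k = (b ! k \<noteq> b ! j)"
  by (simp add: cng_def)

lemma cng_drop: "k < n \<Longrightarrow> drop n (cng j k b) = drop n b"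
  by (simp add: cng_def)

lemma CXd_eq: assumes "j < n" shows "CXd n d j = Pm (n + d) (cxg n j)"
proof (rule ext)
  fix \<psi>
  have "CXd n d j \<psi> = lin_op (n + d) (perm_mat (cxg n j)) \<psi>" by (simp add: CXd_def cxg_def[abs_def])
  also have "\<dots> = Pm (n + d) (cxg n j) \<psi>" by (rule lin_perm) (use assms in \<open>auto simp: cxg_len cxg_inv\<close>)
  finally show "CXd n d j \<psi> = Pm (n + d) (cxg n j) \<psi>" .
qed

lemma CNOT_eq: assumes "j < N" "k < N" "j \<noteq> k" shows "CNOT N j k = Pm N (cng j k)"
proof (rule ext)
  fix \<psi>
  have "CNOT N j k \<psi> = lin_op N (perm_mat (cng j k)) \<psi>" by (simp add: CNOT_def cng_def[abs_def])
  also have "\<dots> = Pm N (cng j k) \<psi>" by (rule lin_perm) (use assms in \<open>auto simp: cng_len cng_inv\<close>)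
  finally show "CNOT N j k \<psi> = Pm N (cng j k) \<psi>" .
qed

lemma Pd_eq: "Pd n d k = Dg (n + d) (pdph n d k)"
  unfolding Pd_def pdph_def by (rule ext, rule lin_diag)

lemma Uj_eq: assumes "j < n" shows "U_j n d q j \<psi> = Dg (n + d) (pdph n d (- q / 2) \<circ> cxg n j) \<psi>"
proof -
  have "U_j n d q j \<psi> = Pm (n + d) (cxg n j) (Dg (n + d) (pdph n d (- q / 2)) (Pm (n + d) (cxg n j) \<psi>))"
    using assms by (simp add: U_j_def CXd_eq Pd_eq)
  also have "\<dots> = Dg (n + d) (pdph n d (- q / 2) \<circ> cxg n j) \<psi>"
    by (rule Pm_Dg_Pm) (use assms in \<open>auto simp: cxg_len cxg_inv\<close>)
  finally show ?thesis .
qed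

lemma Ujk_eq: assumes "j < k" "k < n"
  shows "U_jk n d q j k \<psi> = Dg (n + d) (pdph n d (q / 2) \<circ> (cxg n k \<circ> cng j k)) \<psi>"
proof -
  let ?N = "n + d"
  have c: "CNOT ?N j k = Pm ?N (cng j k)" using assms by (intro CNOT_eq) auto
  have x: "CXd n d k = Pm ?N (cxg n k)" using assms by (intro CXd_eq) auto
  have "U_jk n d q j k \<psi> = Pm ?N (cng j k) (Pm ?N (cxg n k) (Dg ?N (pdph n d (q / 2))
          (Pm ?N (cxg n k) (Pm ?N (cng j k) \<psi>))))"
    by (simp add: U_jk_def c x Pd_eq)
  also have "\<dots> = Pm ?N (cxg n k \<circ> cng j k) (Dg ?N (pdph n d (q / 2))
          (Pm ?N (cng j k \<circ> cxg n k) \<psi>))"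
    by (subst Pm_Pm, simp add: cng_len, subst Pm_Pm, simp add: cxg_len, rule refl)
  also have "\<dots> = Dg ?N (pdph n d (q / 2) \<circ> (cxg n k \<circ> cng j k)) \<psi>"
    by (rule Pm_Dg_Pm) (use assms in \<open>auto simp: cxg_len cxg_inv cng_len cng_inv\<close>)
  finally show ?thesis .
qed

lemma pdph_eval: "length b = n + d \<Longrightarrow> pdph n d k b = cis (2 * pi * k * real (bval (drop n b)) / 2 ^ d)"
  unfolding pdph_def by (rule Pd_phase) simp


definition pairs :: "nat \<Rightarrow> (nat \<times> nat) list" where
  "pairs n = [(j, k). j \<leftarrow> [0..<n - 1], k \<leftarrow> [j + 1..<n]]"

lemma pairs_mem: "(j, k) \<in> set (pairs n) \<Longrightarrow> j < k \<and> k < n"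
  by (auto simp: pairs_def)

definition Phi :: "nat \<Rightarrow> nat \<Rightarrow> (nat \<Rightarrow> nat \<Rightarrow> real) \<Rightarrow> real \<Rightarrow> bool list \<Rightarrow> complex" where
  "Phi n d Q f0 b =
     pdph n d (f0 + (\<Sum>j<n. Q j j) / 4 + (\<Sum>j<n. \<Sum>k<n. Q j k) / 4) b
     * ((\<Prod>j\<leftarrow>[0..<n]. (pdph n d (- (\<Sum>k<n. Q j k) / 2) \<circ> cxg n j) b)
     * (\<Prod>i\<leftarrow>pairs n. (\<lambda>(j, k). (pdph n d (Q j k / 2) \<circ> (cxg n k \<circ> cng j k)) b) i))"

lemma comp_pairs: "comp_list [U_jk n d (Q j k) j k. j \<leftarrow> [0..<n - 1], k \<leftarrow> [j + 1..<n]]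
   = comp_list (map (\<lambda>(j, k). U_jk n d (Q j k) j k) (pairs n))"
  by (simp add: pairs_def map_concat o_def)

lemma Utilde_eq: "Utilde n d Q f0 \<psi> = Dg (n + d) (Phi n d Q f0) \<psi>"
proof -
  let ?N = "n + d"
  let ?qe = "f0 + (\<Sum>j<n. Q j j) / 4 + (\<Sum>j<n. \<Sum>k<n. Q j k) / 4"
  let ?q = "\<lambda>j. \<Sum>k<n. Q j k"
  let ?g2 = "\<lambda>(j, k). U_jk n d (Q j k) j k"
  let ?p2 = "\<lambda>(j, k). pdph n d (Q j k / 2) \<circ> (cxg n k \<circ> cng j k)"
  have "Utilde n d Q f0 \<psi> = Dg ?N (pdph n d ?qe)
      (comp_list (map (\<lambda>j. U_j n d (?q j) j) [0..<n]) (comp_list (map ?g2 (pairs n)) \<psi>))"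
    unfolding Utilde_def Let_def U_empty_def comp_pairs by (simp add: Pd_eq)
  also have "\<dots> = Dg ?N (\<lambda>b. pdph n d ?qe b * (\<Prod>j\<leftarrow>[0..<n]. (pdph n d (- ?q j / 2) \<circ> cxg n j) b))
      (comp_list (map ?g2 (pairs n)) \<psi>)"
    by (rule comp_list_Dg) (simp add: Uj_eq o_def)
  also have "\<dots> = Dg ?N (\<lambda>b. (pdph n d ?qe b * (\<Prod>j\<leftarrow>[0..<n]. (pdph n d (- ?q j / 2) \<circ> cxg n j) b))
      * (\<Prod>i\<leftarrow>pairs n. ?p2 i b)) \<psi>"
    by (rule comp_list_Dg) (auto simp: Ujk_eq o_def dest: pairs_mem)
  also have "\<dots> = Dg ?N (Phi n d Q f0) \<psi>"
    by (rule arg_cong2[where f = "Dg ?N"], rule ext) (simp_all add: Phi_def mult.assoc split_def)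
  finally show ?thesis .
qed


definition tri :: "nat \<Rightarrow> (nat \<Rightarrow> nat \<Rightarrow> real) \<Rightarrow> real" where
  "tri n h = (\<Sum>j<n. \<Sum>k\<in>{Suc j..<n}. h j k)"

lemma tri_swap: "(\<Sum>j<n. \<Sum>k<j. h j k) = tri n (\<lambda>j k. h k j)"
  unfolding tri_def
proof (induction n)
  case 0
  then show ?case by simp
next
  case (Suc n)
  have "(\<Sum>j<Suc n. \<Sum>k\<in>{Suc j..<Suc n}. h k j) = (\<Sum>j<n. \<Sum>k\<in>{Suc j..<Suc n}. h k j)"
    by simp
  also have "\<dots> = (\<Sum>j<n. (\<Sum>k\<in>{Suc j..<n}. h k j) + h n j)"
    by (rule sum.cong) auto
  also have "\<dots> = (\<Sum>j<n. \<Sum>k\<in>{Suc j..<n}. h k j) + (\<Sum>j<n. h n j)"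
    by (simp add: sum.distrib)
  finally show ?case using Suc by simp
qed

lemma tri_full: "(\<Sum>j<n. \<Sum>k<n. h j k) = (\<Sum>j<n. h j j) + tri n h + tri n (\<lambda>j k. h k j)"
proof -
  have "(\<Sum>k<n. h j k) = (\<Sum>k<j. h j k) + h j j + (\<Sum>k\<in>{Suc j..<n}. h j k)" if "j < n" for j
  proof -
    have "(\<Sum>k<n. h j k) = (\<Sum>k\<in>{0..<j}. h j k) + (\<Sum>k\<in>{j..<n}. h j k)"
      using that by (simp add: atLeast0LessThan[symmetric] sum.atLeastLessThan_concat)
    also have "(\<Sum>k\<in>{j..<n}. h j k) = h j j + (\<Sum>k\<in>{Suc j..<n}. h j k)"
      using that by (rule sum.atLeast_Suc_lessThan)
    finally show ?thesis by (simp add: atLeast0LessThan)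
  qed
  then have "(\<Sum>j<n. \<Sum>k<n. h j k) = (\<Sum>j<n. (\<Sum>k<j. h j k) + h j j + (\<Sum>k\<in>{Suc j..<n}. h j k))"
    by (intro sum.cong) auto
  also have "\<dots> = (\<Sum>j<n. \<Sum>k<j. h j k) + (\<Sum>j<n. h j j) + tri n h"
    by (simp add: sum.distrib tri_def)
  finally show ?thesis by (simp add: tri_swap)
qed

lemma tri_lin: "tri n (\<lambda>j k. a * h1 j k + b * h2 j k + e * h3 j k) = a * tri n h1 + b * tri n h2 + e * tri n h3"
  by (simp add: tri_def sum.distrib sum_distrib_left)

lemma my_sum_list_concat: "sum_list (concat xss) = sum_list (map sum_list (xss :: real list list))"
  by (induction xss) auto

lemma sum_pairs: "(\<Sum>i\<leftarrow>pairs n. (\<lambda>(j, k). h j k) i) = tri n h"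
proof -
  have "(\<Sum>i\<leftarrow>pairs n. (\<lambda>(j, k). h j k) i) = (\<Sum>j\<leftarrow>[0..<n - 1]. \<Sum>k\<leftarrow>[j + 1..<n]. h j k)"
    by (simp add: pairs_def map_concat my_sum_list_concat o_def)
  also have "\<dots> = (\<Sum>j\<in>{0..<n - 1}. \<Sum>k\<in>{j + 1..<n}. h j k)"
    by (simp add: sum_set_upt_conv_sum_list_nat[symmetric])
  also have "\<dots> = tri n h"
  proof (cases n)
    case 0
    then show ?thesis by (simp add: tri_def)
  next
    case (Suc m)
    then show ?thesis by (simp add: tri_def atLeast0LessThan)
  qed
  finally show ?thesis .
qed


lemma tri_cong: "(\<And>j k. j < k \<Longrightarrow> k < n \<Longrightarrow> h j k = h' j k) \<Longrightarrow> tri n h = tri n h'"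
  unfolding tri_def by (intro sum.cong) auto

lemma angle_id:
  fixes Q :: "nat \<Rightarrow> nat \<Rightarrow> real" and X :: "nat \<Rightarrow> real"
  assumes sym: "\<forall>j<n. \<forall>k<n. Q j k = Q k j"
    and X01: "\<And>j. X j = 0 \<or> X j = 1"
  shows "(c + (\<Sum>j<n. Q j j) / 4 + (\<Sum>j<n. \<Sum>k<n. Q j k) / 4) * Y
    + (\<Sum>j<n. (- (\<Sum>k<n. Q j k) / 2) * (Y + X j * (M - 1 - 2 * Y)))
    + tri n (\<lambda>j k. (Q j k / 2) * (Y + (X j + X k - 2 * X j * X k) * (M - 1 - 2 * Y)))
    = (c + (\<Sum>j<n. \<Sum>k<n. Q j k * X j * X k)) * Y - (M - 1) / 2 * (\<Sum>j<n. \<Sum>k<n. Q j k * X j * X k)"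
proof -
  define D where "D = M - 1 - 2 * Y"
  define S where "S = (\<Sum>j<n. \<Sum>k<n. Q j k)"
  define tr where "tr = (\<Sum>j<n. Q j j)"
  define P where "P = (\<Sum>j<n. (\<Sum>k<n. Q j k) * X j)"
  define D' where "D' = (\<Sum>j<n. Q j j * X j)"
  define A where "A = (\<Sum>j<n. \<Sum>k<n. Q j k * X j * X k)"
  define T1 where "T1 = tri n Q"
  define T2 where "T2 = tri n (\<lambda>j k. Q j k * (X j + X k))"
  define T3 where "T3 = tri n (\<lambda>j k. Q j k * X j * X k)"
  have e1: "S = tr + 2 * T1"
  proof -
    have "tri n (\<lambda>j k. Q k j) = tri n Q" by (rule tri_cong) (use sym in auto)
    then show ?thesis unfolding S_def tr_def T1_def using tri_full[where n=n and h=Q] by simp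
  qed
  have e2: "2 * P = 2 * D' + 2 * T2"
  proof -
    have a: "(\<Sum>j<n. \<Sum>k<n. Q j k * X j) = P"
      unfolding P_def by (simp add: sum_distrib_right)
    have "(\<Sum>j<n. \<Sum>k<n. Q j k * X k) = (\<Sum>k<n. \<Sum>j<n. Q j k * X k)" by (rule sum.swap)
    also have "\<dots> = (\<Sum>k<n. \<Sum>j<n. Q k j * X k)"
      by (intro sum.cong) (use sym in auto)
    also have "\<dots> = P" unfolding P_def by (simp add: sum_distrib_right)
    finally have b: "(\<Sum>j<n. \<Sum>k<n. Q j k * X k) = P" .
    have "(\<Sum>j<n. \<Sum>k<n. Q j k * (X j + X k)) = 2 * P"
      using a b by (simp add: distrib_left sum.distrib)
    moreover have "tri n (\<lambda>j k. Q k j * (X k + X j)) = T2"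
      unfolding T2_def by (rule tri_cong) (use sym in auto)
    moreover have "(\<Sum>j<n. Q j j * (X j + X j)) = 2 * D'"
      unfolding D'_def by (simp add: sum_distrib_left algebra_simps)
    ultimately show ?thesis using tri_full[where n=n and h="\<lambda>j k. Q j k * (X j + X k)"] unfolding T2_def by simp
  qed
  have e3: "A = D' + 2 * T3"
  proof -
    have "tri n (\<lambda>j k. Q k j * X k * X j) = T3"
      unfolding T3_def by (rule tri_cong) (use sym in auto)
    moreover have "(\<Sum>j<n. Q j j * X j * X j) = D'"
      unfolding D'_def by (rule sum.cong) (use X01 in auto)
    ultimately show ?thesis using tri_full[where n=n and h="\<lambda>j k. Q j k * X j * X k"] unfolding A_def T3_def by simp
  qed
  have s1: "(\<Sum>j<n. (- (\<Sum>k<n. Q j k) / 2) * (Y + X j * D)) = - (Y / 2) * S - (D / 2) * P"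
  proof -
    have "(\<Sum>j<n. (- (\<Sum>k<n. Q j k) / 2) * (Y + X j * D))
        = (\<Sum>j<n. (- (Y / 2)) * (\<Sum>k<n. Q j k) + (- (D / 2)) * ((\<Sum>k<n. Q j k) * X j))"
      by (rule sum.cong) (simp_all add: algebra_simps)
    also have "\<dots> = - (Y / 2) * S - (D / 2) * P"
      unfolding sum.distrib sum_distrib_left[symmetric] S_def P_def by simp
    finally show ?thesis .
  qed
  have s2: "tri n (\<lambda>j k. (Q j k / 2) * (Y + (X j + X k - 2 * X j * X k) * D)) = (Y / 2) * T1 + (D / 2) * T2 + (- D) * T3"
  proof -
    have "(\<lambda>j k. (Q j k / 2) * (Y + (X j + X k - 2 * X j * X k) * D))
        = (\<lambda>j k. (Y / 2) * Q j k + (D / 2) * (Q j k * (X j + X k)) + (- D) * (Q j k * X j * X k))"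
      by (intro ext) (simp add: algebra_simps)
    then show ?thesis unfolding T1_def T2_def T3_def by (simp only: tri_lin)
  qed
  have "(c + tr / 4 + S / 4) * Y - (Y / 2) * S - (D / 2) * P + ((Y / 2) * T1 + (D / 2) * T2 + (- D) * T3)
      = (c + A) * Y - (M - 1) / 2 * A"
  proof -
    have T1e: "T1 = (S - tr) / 2" using e1 by simp
    have T2e: "T2 = P - D'" using e2 by simp
    have T3e: "T3 = (A - D') / 2" using e3 by simp
    show ?thesis unfolding T1e T2e T3e D_def by (simp add: field_simps)
  qed
  then show ?thesis using s1 s2 unfolding D_def[symmetric] S_def[symmetric] tr_def[symmetric] A_def[symmetric]
    by simp
qed


lemma pdph_eval': "length b = n + d \<Longrightarrow> pdph n d k b = cis (2 * pi / 2 ^ d * (k * real (bval (drop n b))))"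
  by (simp add: pdph_eval mult.assoc)

lemma bval_cond: assumes "length w = d"
  shows "real (bval (if s then map Not w else w)) = real (bval w) + (if s then 1 else 0) * (2 ^ d - 1 - 2 * real (bval w))"
  using bval_not[OF assms] by auto

lemma prod_list_cong: "(\<And>i. i \<in> set L \<Longrightarrow> f i = g i) \<Longrightarrow> (\<Prod>i\<leftarrow>L. f i) = (\<Prod>i\<leftarrow>L. (g i :: complex))"
  by (metis map_cong)

lemma tri_mult: "tri n (\<lambda>j k. a * h j k) = a * tri n h"
  by (simp add: tri_def sum_distrib_left)

lemma Phi_eval:
  assumes len: "length b = n + d"
  defines "Y \<equiv> real (bval (drop n b))"
  defines "X \<equiv> (\<lambda>j. if b ! j then 1 else 0 :: real)"
  shows "Phi n d Q f0 b = cis (2 * pi / 2 ^ d * (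
      (f0 + (\<Sum>j<n. Q j j) / 4 + (\<Sum>j<n. \<Sum>k<n. Q j k) / 4) * Y
    + (\<Sum>j<n. (- (\<Sum>k<n. Q j k) / 2) * (Y + X j * (2 ^ d - 1 - 2 * Y)))
    + tri n (\<lambda>j k. (Q j k / 2) * (Y + (X j + X k - 2 * X j * X k) * (2 ^ d - 1 - 2 * Y)))))"
proof -
  let ?c = "2 * pi / 2 ^ d"
  let ?qe = "f0 + (\<Sum>j<n. Q j j) / 4 + (\<Sum>j<n. \<Sum>k<n. Q j k) / 4"
  let ?D = "2 ^ d - 1 - 2 * Y"
  have w: "length (drop n b) = d" using len by simp
  have f1: "pdph n d ?qe b = cis (?c * (?qe * Y))" unfolding Y_def by (rule pdph_eval'[OF len])
  have f2: "(\<Prod>j\<leftarrow>[0..<n]. (pdph n d (- (\<Sum>k<n. Q j k) / 2) \<circ> cxg n j) b)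
      = (\<Prod>j\<leftarrow>[0..<n]. cis (?c * ((- (\<Sum>k<n. Q j k) / 2) * (Y + X j * ?D))))"
  proof (rule prod_list_cong)
    fix j assume "j \<in> set [0..<n]"
    have l: "length (cxg n j b) = n + d" using len by (rule cxg_len)
    show "(pdph n d (- (\<Sum>k<n. Q j k) / 2) \<circ> cxg n j) b = cis (?c * ((- (\<Sum>k<n. Q j k) / 2) * (Y + X j * ?D)))"
      using pdph_eval'[OF l] cxg_drop[OF len] bval_cond[OF w, of "b ! j"]
      by (simp add: Y_def X_def)
  qed
  have f3: "(\<Prod>i\<leftarrow>pairs n. (\<lambda>(j, k). (pdph n d (Q j k / 2) \<circ> (cxg n k \<circ> cng j k)) b) i)
      = (\<Prod>i\<leftarrow>pairs n. (\<lambda>(j, k). cis (?c * ((Q j k / 2) * (Y + (X j + X k - 2 * X j * X k) * ?D)))) i)"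
  proof (rule prod_list_cong)
    fix i assume "i \<in> set (pairs n)"
    then obtain j k where i: "i = (j, k)" and jk: "j < k" "k < n" by (metis pairs_mem surj_pair)
    have l1: "length (cng j k b) = n + d" using len by (simp add: cng_len)
    have l: "length (cxg n k (cng j k b)) = n + d" using l1 by (rule cxg_len)
    have kk: "cng j k b ! k = (b ! k \<noteq> b ! j)" using jk len by (intro cng_nth_k) auto
    have dr: "drop n (cng j k b) = drop n b" using jk by (intro cng_drop)
    have xx: "(if b ! k \<noteq> b ! j then 1 else 0 :: real) = X j + X k - 2 * X j * X k"
      unfolding X_def by auto
    have dd: "drop n (cxg n k (cng j k b)) = (if b ! k \<noteq> b ! j then map Not (drop n b) else drop n b)"
      using cxg_drop[OF l1, of k] kk dr by simp
    have "(pdph n d (Q j k / 2) \<circ> (cxg n k \<circ> cng j k)) b = pdph n d (Q j k / 2) (cxg n k (cng j k b))"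
      by simp
    also have "\<dots> = cis (?c * ((Q j k / 2) * real (bval (drop n (cxg n k (cng j k b))))))"
      by (rule pdph_eval'[OF l])
    also have "real (bval (drop n (cxg n k (cng j k b)))) = Y + (X j + X k - 2 * X j * X k) * ?D"
      unfolding dd bval_cond[OF w] xx Y_def by simp
    finally show "(\<lambda>(j, k). (pdph n d (Q j k / 2) \<circ> (cxg n k \<circ> cng j k)) b) i
        = (\<lambda>(j, k). cis (?c * ((Q j k / 2) * (Y + (X j + X k - 2 * X j * X k) * ?D)))) i"
      using i by simp
  qed
  have g2: "(\<Prod>j\<leftarrow>[0..<n]. cis (?c * ((- (\<Sum>k<n. Q j k) / 2) * (Y + X j * ?D))))
      = cis (?c * (\<Sum>j<n. (- (\<Sum>k<n. Q j k) / 2) * (Y + X j * ?D)))"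
    by (simp add: prod_list_cis sum_set_upt_conv_sum_list_nat[symmetric] atLeast0LessThan sum_distrib_left)
  have g3: "(\<Prod>i\<leftarrow>pairs n. (\<lambda>(j, k). cis (?c * ((Q j k / 2) * (Y + (X j + X k - 2 * X j * X k) * ?D)))) i)
      = cis (?c * tri n (\<lambda>j k. (Q j k / 2) * (Y + (X j + X k - 2 * X j * X k) * ?D)))"
  proof -
    have "(\<Prod>i\<leftarrow>pairs n. (\<lambda>(j, k). cis (?c * ((Q j k / 2) * (Y + (X j + X k - 2 * X j * X k) * ?D)))) i)
        = (\<Prod>i\<leftarrow>pairs n. cis ((\<lambda>(j, k). ?c * ((Q j k / 2) * (Y + (X j + X k - 2 * X j * X k) * ?D))) i))"
      by (rule prod_list_cong) auto
    also have "\<dots> = cis (\<Sum>i\<leftarrow>pairs n. (\<lambda>(j, k). ?c * ((Q j k / 2) * (Y + (X j + X k - 2 * X j * X k) * ?D))) i)"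
      by (rule prod_list_cis)
    also have "\<dots> = cis (tri n (\<lambda>j k. ?c * ((Q j k / 2) * (Y + (X j + X k - 2 * X j * X k) * ?D))))"
      by (simp only: sum_pairs)
    also have "\<dots> = cis (?c * tri n (\<lambda>j k. (Q j k / 2) * (Y + (X j + X k - 2 * X j * X k) * ?D)))"
      by (simp only: tri_mult)
    finally show ?thesis .
  qed
  show ?thesis
    unfolding Phi_def f1 f2 f3 g2 g3 cis_mult by (rule arg_cong[where f=cis]) (simp only: distrib_left add.assoc)
qed


lemma Phi_closed:
  assumes sym: "\<forall>j<n. \<forall>k<n. Q j k = Q k j" and len: "length b = n + d"
  shows "Phi n d Q c b = cis (2 * pi / 2 ^ d * ((c + (\<Sum>j<n. \<Sum>k<n. Q j k * (if b ! j then 1 else 0) * (if b ! k then 1 else 0))) * real (bval (drop n b))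
      - (2 ^ d - 1) / 2 * (\<Sum>j<n. \<Sum>k<n. Q j k * (if b ! j then 1 else 0) * (if b ! k then 1 else 0))))"
  unfolding Phi_eval[OF len]
  by (subst angle_id[OF sym]) auto

lemma lin_ket: "length b0 = N \<Longrightarrow> lin_op N M (ket b0) = (\<lambda>b. M b b0)"
  unfolding lin_op_def ket_def
  by (rule ext) (simp add: finite_len if_distrib sum.delta' cong: if_cong)

lemma sum_reindex_x:
  assumes lx: "length x = n"
    and z: "\<And>b'. length b' = n + d \<Longrightarrow> take n b' \<noteq> x \<Longrightarrow> g b' = 0"
  shows "(\<Sum>b'\<in>{bs. length bs = n + d}. g b') = (\<Sum>z<(2::nat) ^ d. g (x @ bits_d d (int z)))"
proof -
  let ?h = "\<lambda>z::nat. x @ bits_d d (int z)"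
  have inj: "inj_on ?h {..<2 ^ d}"
  proof (rule inj_onI)
    fix a b :: nat assume a: "a \<in> {..<2 ^ d}" and b: "b \<in> {..<2 ^ d}" and e: "?h a = ?h b"
    then have "bits_d d (int a) = bits_d d (int b)" by simp
    moreover have "int a \<in> {0..<2 ^ d}" "int b \<in> {0..<2 ^ d}" using a b by auto
    ultimately have "int a = int b" using inj_bits[of d] by (meson inj_onD)
    then show "a = b" by simp
  qed
  have sub: "?h ` {..<2 ^ d} \<subseteq> {bs. length bs = n + d}" using lx by auto
  have out: "\<forall>b'\<in>{bs. length bs = n + d} - ?h ` {..<2 ^ d}. g b' = 0"
  proof
    fix b' assume b': "b' \<in> {bs. length bs = n + d} - ?h ` {..<2 ^ d}"
    show "g b' = 0"
    proof (rule z)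
      show "length b' = n + d" using b' by simp
      show "take n b' \<noteq> x"
      proof
        assume t: "take n b' = x"
        have ld: "length (drop n b') = d" using b' by simp
        have "b' = x @ bits_d d (int (bval (drop n b')))"
          using t bits_bval[OF ld] by (metis append_take_drop_id)
        moreover have "bval (drop n b') < 2 ^ d" using bval_lt[OF ld] by (simp add: of_nat_less_iff[symmetric])
        ultimately have "b' \<in> ?h ` {..<2 ^ d}" by blast
        then show False using b' by simp
      qed
    qed
  qed
  have "(\<Sum>b'\<in>{bs. length bs = n + d}. g b') = (\<Sum>b'\<in>?h ` {..<2 ^ d}. g b')"
    by (rule sum.mono_neutral_right[OF finite_len sub out])
  also have "\<dots> = (\<Sum>z<(2::nat) ^ d. g (?h z))"
    by (rule sum.reindex[OF inj, unfolded o_def])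
  finally show ?thesis .
qed

lemma geom:
  fixes m :: int
  shows "(\<Sum>z<(2::nat) ^ d. cis (2 * pi * real z * of_int m / 2 ^ d)) = (if (2 ^ d) dvd m then 2 ^ d else 0)"
proof -
  let ?w = "cis (2 * pi * of_int m / 2 ^ d)"
  have pw: "cis (2 * pi * real z * of_int m / 2 ^ d) = ?w ^ z" for z
    by (simp add: DeMoivre mult.commute mult.left_commute)
  show ?thesis
  proof (cases "(2 ^ d) dvd m")
    case True
    then obtain k where k: "m = 2 ^ d * k" by blast
    have e: "2 * pi * real_of_int m / 2 ^ d = 2 * pi * real_of_int k" using k by simp
    have "?w = 1" unfolding e by (rule cis_multiple_2pi) simp
    then show ?thesis using True by (simp add: pw)
  next
    case False
    have ne: "?w \<noteq> 1"
    proof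
      assume "?w = 1"
      then have "cos (2 * pi * of_int m / 2 ^ d) = 1" by (metis cis.sel(1) one_complex.sel(1))
      then obtain k :: int where k: "2 * pi * of_int m / 2 ^ d = of_int k * 2 * pi"
        using cos_one_2pi_int by blast
      then have "real_of_int m = of_int k * 2 ^ d" by (simp add: field_simps)
      then have "m = k * 2 ^ d" by (metis of_int_eq_iff of_int_mult of_int_numeral of_int_power)
      then show False using False by simp
    qed
    have wM: "?w ^ (2 ^ d) = 1"
    proof -
      have "?w ^ (2 ^ d) = cis (2 * pi * of_int m)" by (simp add: DeMoivre)
      also have "\<dots> = 1" by (rule cis_multiple_2pi) simp
      finally show ?thesis .
    qed
    have "(\<Sum>z<(2::nat) ^ d. ?w ^ z) = 0" using geometric_sum[OF ne, of "2 ^ d"] wM by simp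
    then show ?thesis using False by (simp add: pw)
  qed
qed

lemma rr: "complex_of_real (2 powr (- real d / 2)) * complex_of_real (2 powr (- real d / 2)) = 1 / 2 ^ d"
proof -
  have "(2::real) powr (- real d / 2) * 2 powr (- real d / 2) = 2 powr (- real d)"
    by (simp add: powr_add[symmetric])
  also have "\<dots> = 1 / 2 ^ d" by (simp add: powr_minus powr_realpow divide_inverse)
  finally show ?thesis by (metis of_real_mult of_real_divide of_real_1 of_real_numeral of_real_power)
qed


lemma Dg_ket: "length b0 = N \<Longrightarrow> Dg N \<phi> (ket b0) = (\<lambda>b. \<phi> b0 * ket b0 b)"
  by (auto simp: Dg_def ket_def)

lemma f0_eq:
  assumes f_def: "\<forall>x. length x = n \<longrightarrow>
        real_of_int (f x) = c + (\<Sum>j<n. \<Sum>k<n. Q j k * (if x ! j then 1 else 0) * (if x ! k then 1 else 0))"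
  shows "real_of_int (f (replicate n False)) = c"
proof -
  have "(\<Sum>j<n. \<Sum>k<n. Q j k * (if replicate n False ! j then 1 else 0) * (if replicate n False ! k then 1 else 0)) = (0::real)"
    by (intro sum.neutral ballI) simp
  then show ?thesis using f_def[rule_format, of "replicate n False"] by simp
qed

lemma phase_f:
  fixes Q :: "nat \<Rightarrow> nat \<Rightarrow> real" and f :: "bool list \<Rightarrow> int"
  assumes sym: "\<forall>j<n. \<forall>k<n. Q j k = Q k j"
    and f_def: "\<forall>x. length x = n \<longrightarrow>
        real_of_int (f x) = c + (\<Sum>j<n. \<Sum>k<n. Q j k * (if x ! j then 1 else 0) * (if x ! k then 1 else 0))"
    and len: "length b = n + d"
  shows "Phi n d Q (real_of_int (f (replicate n False))) b
     = cis (2 * pi / 2 ^ d * real_of_int (f (take n b)) * real (bval (drop n b))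
            + pi * (1 - 2 ^ d) / 2 ^ d * real_of_int (f (take n b) - f (replicate n False)))"
proof -
  define A where "A = (\<Sum>j<n. \<Sum>k<n. Q j k * (if b ! j then 1 else 0) * (if b ! k then (1::real) else 0))"
  have c: "real_of_int (f (replicate n False)) = c" by (rule f0_eq[OF f_def])
  have "A = (\<Sum>j<n. \<Sum>k<n. Q j k * (if take n b ! j then 1 else 0) * (if take n b ! k then 1 else 0))"
    unfolding A_def by (intro sum.cong refl) simp
  then have fx: "real_of_int (f (take n b)) = c + A" using f_def[rule_format, of "take n b"] len by simp
  have "Phi n d Q c b = cis (2 * pi / 2 ^ d * ((c + A) * real (bval (drop n b))) - 2 * pi / 2 ^ d * ((2 ^ d - 1) / 2 * A))"
    using Phi_closed[OF sym len, of c] unfolding A_def by (simp add: right_diff_distrib)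
  also have "\<dots> = cis (2 * pi / 2 ^ d * real_of_int (f (take n b)) * real (bval (drop n b))
            + pi * (1 - 2 ^ d) / 2 ^ d * real_of_int (f (take n b) - f (replicate n False)))"
    by (rule arg_cong[where f = cis]) (simp add: fx c field_simps)
  finally show ?thesis using c by simp
qed


lemma dvd_iff_bits:
  fixes y F :: int
  assumes lv: "length v = d"
  shows "((2::int) ^ d dvd (int (bval (bits_d d y)) + F - int (bval v))) \<longleftrightarrow> v = bits_d d (y + F)"
proof -
  let ?M = "(2::int) ^ d"
  let ?V = "int (bval v)"
  have V0: "0 \<le> ?V" "?V < ?M" using bval_lt[OF lv] by auto
  have "?M dvd (int (bval (bits_d d y)) + F - ?V) \<longleftrightarrow> (y mod ?M + F) mod ?M = ?V mod ?M"
    by (simp add: bval_bits mod_eq_dvd_iff)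
  also have "\<dots> \<longleftrightarrow> (y + F) mod ?M = ?V"
    using V0 by (simp add: mod_add_left_eq)
  also have "\<dots> \<longleftrightarrow> v = bits_d d (y + F)"
  proof
    assume "(y + F) mod ?M = ?V"
    then have "bits_d d ?V = bits_d d (y + F)" by (metis bits_mod)
    then show "v = bits_d d (y + F)" using bits_bval[OF lv] by simp
  next
    assume "v = bits_d d (y + F)"
    then have "int (bval v) = int (bval (bits_d d (y + F)))" by simp
    then show "(y + F) mod ?M = ?V" by (simp add: bval_bits)
  qed
  finally show ?thesis .
qed

lemma QM_val: "length b = n + d \<Longrightarrow> length b' = n + d \<Longrightarrow> take n b = take n b' \<Longrightarrow>
   QFT_mat n d b b' = complex_of_real (2 powr (- real d / 2)) * cis (2 * pi * real (bval (drop n b')) * real (bval (drop n b)) / 2 ^ d)"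
  by (simp add: QFT_mat_def)

lemma QM_zero: "\<not> (length b = n + d \<and> length b' = n + d \<and> take n b = take n b') \<Longrightarrow> QFT_mat n d b b' = 0"
  by (auto simp: QFT_mat_def)

lemma part2:
  fixes Q :: "nat \<Rightarrow> nat \<Rightarrow> real" and f :: "bool list \<Rightarrow> int"
  assumes sym: "\<forall>j<n. \<forall>k<n. Q j k = Q k j"
    and f_def: "\<forall>x. length x = n \<longrightarrow>
        real_of_int (f x) = c + (\<Sum>j<n. \<Sum>k<n. Q j k * (if x ! j then 1 else 0) * (if x ! k then 1 else 0))"
    and lx: "length x = n"
  shows "U_f n d Q (real_of_int (f (replicate n False))) (ket_xy d x y)
     = (\<lambda>b. cis (pi * (1 - 2 ^ d) / 2 ^ d * real_of_int (f x - f (replicate n False))) * ket_xy d x (y + f x) b)"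
proof (rule ext)
  fix b
  let ?N = "n + d"
  let ?QM = "QFT_mat n d"
  let ?r = "complex_of_real (2 powr (- real d / 2))"
  let ?\<alpha> = "pi * (1 - 2 ^ d) / 2 ^ d * real_of_int (f x - f (replicate n False))"
  define P where "P = Phi n d Q (real_of_int (f (replicate n False)))"
  define b0 where "b0 = x @ bits_d d y"
  have lb0: "length b0 = ?N" using lx by (simp add: b0_def)
  have tb0: "take n b0 = x" using lx by (simp add: b0_def)
  define g where "g = (\<lambda>b'. cnj (?QM b' b) * (if length b' = ?N then P b' * ?QM b' b0 else 0))"
  have U1: "U_f n d Q (real_of_int (f (replicate n False))) (ket_xy d x y) = lin_op ?N (adj ?QM) (Dg ?N P (\<lambda>b. ?QM b b0))"
    by (simp add: U_f_def QFT_def QFT_dag_def ket_xy_def b0_def[symmetric] Utilde_eq lin_ket[OF lb0] P_def)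
  have U2: "lin_op ?N (adj ?QM) (Dg ?N P (\<lambda>b. ?QM b b0)) b = (\<Sum>b'\<in>{bs. length bs = ?N}. g b')"
    by (simp add: lin_op_def adj_def Dg_def g_def)
  have U: "U_f n d Q (real_of_int (f (replicate n False))) (ket_xy d x y) b = (\<Sum>b'\<in>{bs. length bs = ?N}. g b')"
    using U1 U2 by simp
  show "U_f n d Q (real_of_int (f (replicate n False))) (ket_xy d x y) b = cis ?\<alpha> * ket_xy d x (y + f x) b"
  proof (cases "length b = ?N \<and> take n b = x")
    case False
    have "g b' = 0" if "b' \<in> {bs. length bs = ?N}" for b'
    proof (cases "take n b' = x")
      case True
      then have "?QM b' b = 0" using False that by (intro QM_zero) auto
      then show ?thesis by (simp add: g_def)
    next
      case False
      then have "?QM b' b0 = 0" using tb0 by (intro QM_zero) auto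
      then show ?thesis by (simp add: g_def)
    qed
    then have "(\<Sum>b'\<in>{bs. length bs = ?N}. g b') = 0" by (rule sum.neutral[OF ballI])
    moreover have "ket_xy d x (y + f x) b = 0"
      using False lx by (auto simp: ket_xy_def ket_def)
    ultimately show ?thesis using U by simp
  next
    case True
    then have lb: "length b = ?N" and tb: "take n b = x" by auto
    define v where "v = drop n b"
    have lv: "length v = d" using lb by (simp add: v_def)
    define m where "m = int (bval (bits_d d y)) + f x - int (bval v)"
    have "(\<Sum>b'\<in>{bs. length bs = ?N}. g b') = (\<Sum>z<(2::nat) ^ d. g (x @ bits_d d (int z)))"
    proof (rule sum_reindex_x[OF lx])
      fix b' assume "length b' = ?N" "take n b' \<noteq> x"
      then have "?QM b' b0 = 0" using tb0 by (intro QM_zero) auto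
      then show "g b' = 0" by (simp add: g_def)
    qed
    also have "\<dots> = (\<Sum>z<(2::nat) ^ d. (?r * ?r * cis ?\<alpha>) * cis (2 * pi * real z * of_int m / 2 ^ d))"
    proof (rule sum.cong[OF refl])
      fix z assume "z \<in> {..<(2::nat) ^ d}"
      then have zl: "int z < 2 ^ d" by (metis lessThan_iff of_nat_less_iff of_nat_numeral of_nat_power)
      define b' where "b' = x @ bits_d d (int z)"
      have lb': "length b' = ?N" using lx by (simp add: b'_def)
      have tb': "take n b' = x" using lx by (simp add: b'_def)
      have db': "drop n b' = bits_d d (int z)" using lx by (simp add: b'_def)
      have bz: "real (bval (bits_d d (int z))) = real z"
        using bval_bits_nat[of "int z" d] zl by simp
      have q1: "?QM b' b = ?r * cis (2 * pi * real (bval v) * real z / 2 ^ d)"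
        using QM_val[OF lb' lb] tb tb' db' bz by (simp add: v_def)
      have q2: "?QM b' b0 = ?r * cis (2 * pi * real (bval (bits_d d y)) * real z / 2 ^ d)"
        using QM_val[OF lb' lb0] tb0 tb' db' bz by (simp add: b0_def lx)
      have ph: "P b' = cis (2 * pi / 2 ^ d * real_of_int (f x) * real z + ?\<alpha>)"
        using phase_f[OF sym f_def lb'] tb' db' bz by (simp add: P_def)
      have "g b' = (?r * cis (- (2 * pi * real (bval v) * real z / 2 ^ d))) *
           (cis (2 * pi / 2 ^ d * real_of_int (f x) * real z + ?\<alpha>) * (?r * cis (2 * pi * real (bval (bits_d d y)) * real z / 2 ^ d)))"
        unfolding g_def q1 q2 ph using lb' by (simp add: cis_cnj)
      also have "\<dots> = (?r * ?r) * cis (- (2 * pi * real (bval v) * real z / 2 ^ d) + (2 * pi / 2 ^ d * real_of_int (f x) * real z + ?\<alpha>)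
           + 2 * pi * real (bval (bits_d d y)) * real z / 2 ^ d)"
        by (simp only: cis_mult[symmetric] mult_ac)
      also have "- (2 * pi * real (bval v) * real z / 2 ^ d) + (2 * pi / 2 ^ d * real_of_int (f x) * real z + ?\<alpha>)
           + 2 * pi * real (bval (bits_d d y)) * real z / 2 ^ d = ?\<alpha> + 2 * pi * real z * of_int m / 2 ^ d"
        unfolding m_def by (simp add: field_simps)
      finally show "g (x @ bits_d d (int z)) = (?r * ?r * cis ?\<alpha>) * cis (2 * pi * real z * of_int m / 2 ^ d)"
        by (simp add: b'_def cis_mult[symmetric] mult_ac)
    qed
    also have "\<dots> = (?r * ?r * cis ?\<alpha>) * (if (2 ^ d) dvd m then 2 ^ d else 0)"
      by (simp add: sum_distrib_left[symmetric] geom)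
    also have "\<dots> = (if (2 ^ d) dvd m then cis ?\<alpha> else 0)"
    proof -
      have r2: "?r * ?r * (2::complex) ^ d = 1" unfolding rr by simp
      have "(?r * ?r * cis ?\<alpha>) * 2 ^ d = (?r * ?r * (2::complex) ^ d) * cis ?\<alpha>" by (simp only: mult_ac)
      then show ?thesis using r2 by (simp add: mult.assoc)
    qed
    also have "\<dots> = cis ?\<alpha> * ket_xy d x (y + f x) b"
    proof -
      have bb: "b = x @ v" using tb unfolding v_def by (metis append_take_drop_id)
      have "(2 ^ d) dvd m \<longleftrightarrow> v = bits_d d (y + f x)" unfolding m_def by (rule dvd_iff_bits[OF lv])
      then show ?thesis by (simp add: ket_xy_def ket_def bb)
    qed
    finally show ?thesis using U by simp
  qed
qed

theorem mainTheorem1: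
  fixes n d :: nat and Q :: "nat \<Rightarrow> nat \<Rightarrow> real" and c :: real
    and f :: "bool list \<Rightarrow> int"
  assumes "n \<ge> 1" and "d \<ge> 1"
    and sym: "\<forall>j<n. \<forall>k<n. Q j k = Q k j"
    and f_def: "\<forall>x. length x = n \<longrightarrow>
        real_of_int (f x) = c + (\<Sum>j<n. \<Sum>k<n. Q j k * (if x ! j then 1 else 0) * (if x ! k then 1 else 0))"
    and f_range: "\<forall>x. length x = n \<longrightarrow> - (2 ^ (d - 1)) \<le> f x \<and> f x < 2 ^ (d - 1)"
  shows "(\<forall>x y. length x = n \<longrightarrow> 0 \<le> y \<longrightarrow> y < 2 ^ d \<longrightarrow>
            Utilde n d Q (real_of_int (f (replicate n False))) (ket_xy d x y)
            = (\<lambda>b. cis (2 * pi / 2 ^ d * real_of_int (f x) * real_of_int y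
                     + pi * (1 - 2 ^ d) / 2 ^ d * real_of_int (f x - f (replicate n False)))
                   * ket_xy d x y b))
       \<and> (\<forall>x y. length x = n \<longrightarrow>
            U_f n d Q (real_of_int (f (replicate n False))) (ket_xy d x y)
            = (\<lambda>b. cis (pi * (1 - 2 ^ d) / 2 ^ d * real_of_int (f x - f (replicate n False)))
                   * ket_xy d x (y + f x) b))
       \<and> proj_encoder n d f (U_f n d Q (real_of_int (f (replicate n False))))"
proof (intro conjI)
  show P1: "\<forall>x y. length x = n \<longrightarrow> 0 \<le> y \<longrightarrow> y < 2 ^ d \<longrightarrow>
            Utilde n d Q (real_of_int (f (replicate n False))) (ket_xy d x y)
            = (\<lambda>b. cis (2 * pi / 2 ^ d * real_of_int (f x) * real_of_int y
                     + pi * (1 - 2 ^ d) / 2 ^ d * real_of_int (f x - f (replicate n False)))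
                   * ket_xy d x y b)"
  proof (intro allI impI)
    fix x :: "bool list" and y :: int
    assume lx: "length x = n" and y0: "0 \<le> y" and y1: "y < 2 ^ d"
    define b0 where "b0 = x @ bits_d d y"
    have lb0: "length b0 = n + d" using lx by (simp add: b0_def)
    have tb0: "take n b0 = x" using lx by (simp add: b0_def)
    have db0: "drop n b0 = bits_d d y" using lx by (simp add: b0_def)
    have by0: "real (bval (bits_d d y)) = real_of_int y"
      using bval_bits_nat[OF y0 y1] by (metis of_int_of_nat_eq)
    have "Utilde n d Q (real_of_int (f (replicate n False))) (ket_xy d x y)
        = (\<lambda>b. Phi n d Q (real_of_int (f (replicate n False))) b0 * ket b0 b)"
      by (simp add: ket_xy_def b0_def[symmetric] Utilde_eq Dg_ket[OF lb0])
    also have "Phi n d Q (real_of_int (f (replicate n False))) b0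
      = cis (2 * pi / 2 ^ d * real_of_int (f x) * real_of_int y
                     + pi * (1 - 2 ^ d) / 2 ^ d * real_of_int (f x - f (replicate n False)))"
      using phase_f[OF sym f_def lb0] tb0 db0 by0 by simp
    finally show "Utilde n d Q (real_of_int (f (replicate n False))) (ket_xy d x y)
            = (\<lambda>b. cis (2 * pi / 2 ^ d * real_of_int (f x) * real_of_int y
                     + pi * (1 - 2 ^ d) / 2 ^ d * real_of_int (f x - f (replicate n False)))
                   * ket_xy d x y b)"
      by (simp add: ket_xy_def b0_def)
  qed
  show P2: "\<forall>x y. length x = n \<longrightarrow>
            U_f n d Q (real_of_int (f (replicate n False))) (ket_xy d x y)
            = (\<lambda>b. cis (pi * (1 - 2 ^ d) / 2 ^ d * real_of_int (f x - f (replicate n False)))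
                   * ket_xy d x (y + f x) b)"
    using part2[OF sym f_def] by blast
  show "proj_encoder n d f (U_f n d Q (real_of_int (f (replicate n False))))"
    unfolding proj_encoder_def using P2 by blast
qed

end
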